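(* Let $F,G\in H^2(\mathbb D)$. Then $|F|=|G|$ on $(-1,1)$ if and only if there exist holomorphic functions $u,v$ on $\mathbb D$ such that $F=uv$ and $G=uv^*$.
   Context: $\mathbb D$ is the open unit disc and $H^2(\mathbb D)$ the Hardy space of holomorphic $F$ on $\mathbb D$ with $\sup_{0\le r<1}\frac1{2\pi}\int_{-\pi}^{\pi}|F(re^{i\theta})|^2\,\mathrm d\theta<\infty$. For $v$ holomorphic on $\mathbb D$, $v^*(w)=\overline{v(\bar w)}$. *)

theory Defs
  imports "HOL-Complex_Analysis.Complex_Analysis"
begin

definition hardy2 :: "(complex \<Rightarrow> complex) set" where
  "hardy2 = {F. F holomorphic_on ball 0 1 \<and>
     bdd_above ((\<lambda>r. (1 / (2 * pi)) * integral {-pi..pi} (\<lambda>\<theta>. (cmod (F (complex_of_real r * cis \<theta>)))\<^sup>2)) ` {0..<1})}"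

definition reflect :: "(complex \<Rightarrow> complex) \<Rightarrow> complex \<Rightarrow> complex" where
  "reflect v w = cnj (v (cnj w))"

end

theory Submission
  imports Defs
begin

locale disc_product =
  fixes a :: "nat \<Rightarrow> complex" and p :: "nat \<Rightarrow> nat"
  assumes a_nz: "\<And>n. a n \<noteq> 0"
  assumes a_in: "\<And>n. norm (a n) < 1"
  assumes a_lim: "(\<lambda>n. norm (a n)) \<longlonglongrightarrow> 1"
  assumes p_ge: "\<And>n. n \<le> p n"
begin

definition w :: "nat \<Rightarrow> complex \<Rightarrow> complex" where
  "w n z = of_real (1 - (norm (a n))\<^sup>2) / (1 - cnj (a n) * z)"

definition fac :: "nat \<Rightarrow> complex \<Rightarrow> complex" where
  "fac n z = weierstrass_factor (p n) (w n z)"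

definition f :: "complex \<Rightarrow> complex" where
  "f z = (\<Prod>n. fac n z)"

lemma denom_ge:
  assumes "norm z \<le> r"
  shows "norm (1 - cnj (a n) * z) \<ge> 1 - r"
proof -
  have "norm (cnj (a n) * z) \<le> norm z"
    using a_in[of n] by (simp add: norm_mult mult_left_le_one_le)
  hence "norm (cnj (a n) * z) \<le> r" using assms by linarith
  moreover have "norm (1::complex) - norm (cnj (a n) * z) \<le> norm (1 - cnj (a n) * z)"
    by (rule norm_triangle_ineq2)
  ultimately show ?thesis by simp
qed

lemma denom_nz:
  assumes "norm z < 1"
  shows "1 - cnj (a n) * z \<noteq> 0"
proof -
  have "norm (1 - cnj (a n) * z) \<ge> 1 - norm z"
    by (rule denom_ge) simp
  thus ?thesis using assms by auto
qed

lemma denom_nz': "norm z < 1 \<Longrightarrow> cnj (a n) * z \<noteq> 1"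
  using denom_nz[of z n] by auto

lemma ev_small:
  assumes "0 \<le> r" "r < 1"
  shows "eventually (\<lambda>n. \<forall>z\<in>cball 0 r. norm (w n z) \<le> 1/2) sequentially"
proof -
  have "(\<lambda>n. 1 - (norm (a n))\<^sup>2) \<longlonglongrightarrow> 1 - 1\<^sup>2"
    by (intro tendsto_intros a_lim)
  hence lim0: "(\<lambda>n. 1 - (norm (a n))\<^sup>2) \<longlonglongrightarrow> 0" by simp
  have "(1 - r) / 2 > 0" using assms by simp
  from tendstoD[OF lim0 this]
  have "eventually (\<lambda>n. \<bar>1 - (norm (a n))\<^sup>2\<bar> < (1 - r) / 2) sequentially"
    by (simp add: dist_real_def)
  thus ?thesis
  proof eventually_elim
    case (elim n)
    show ?case
    proof
      fix z :: complex assume z: "z \<in> cball 0 r"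
      have d: "norm (1 - cnj (a n) * z) \<ge> 1 - r"
        using z by (intro denom_ge) auto
      have nn: "0 \<le> 1 - (norm (a n))\<^sup>2"
        using a_in[of n] by (simp add: abs_square_le_1 less_imp_le)
      have nrm: "norm (complex_of_real (1 - (norm (a n))\<^sup>2)) = 1 - (norm (a n))\<^sup>2"
        by (simp only: norm_of_real abs_of_nonneg[OF nn])
      have "norm (w n z) = (1 - (norm (a n))\<^sup>2) / norm (1 - cnj (a n) * z)"
        unfolding w_def norm_divide nrm ..
      also have "\<dots> \<le> (1 - (norm (a n))\<^sup>2) / (1 - r)"
        using d nn assms by (intro divide_left_mono mult_pos_pos) auto
      also have "\<dots> \<le> ((1 - r) / 2) / (1 - r)"
        using elim nn assms by (intro divide_right_mono) auto
      also have "\<dots> = 1/2" using assms by simp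
      finally show "norm (w n z) \<le> 1/2" .
    qed
  qed
qed

lemma fac_bound:
  assumes "norm (w n z) \<le> 1/2"
  shows "norm (fac n z - 1) \<le> 3 * (1/2) ^ Suc n"
proof -
  have "norm (fac n z - 1) \<le> 3 * norm (w n z) ^ Suc (p n)"
    unfolding fac_def by (rule weierstrass_factor_bound) fact
  also have "\<dots> \<le> 3 * (1/2) ^ Suc (p n)"
    using assms by (intro mult_left_mono power_mono) auto
  also have "\<dots> \<le> 3 * (1/2) ^ Suc n"
    using p_ge[of n] by (intro mult_left_mono power_decreasing) auto
  finally show ?thesis .
qed

lemma summable_geo: "summable (\<lambda>n. 3 * (1/2::real) ^ Suc n)"
  by (intro summable_mult) (simp add: summable_Suc_iff)

lemma abs_convergent:
  assumes "norm z < 1"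
  shows "abs_convergent_prod (\<lambda>n. fac n z)"
  unfolding abs_convergent_prod_conv_summable
proof (rule summable_comparison_test_ev[OF _ summable_geo])
  have "eventually (\<lambda>n. \<forall>z'\<in>cball 0 (norm z). norm (w n z') \<le> 1/2) sequentially"
    using assms by (intro ev_small) auto
  thus "eventually (\<lambda>n. norm (norm (fac n z - 1)) \<le> 3 * (1/2) ^ Suc n) sequentially"
  proof eventually_elim
    case (elim n)
    hence "norm (w n z) \<le> 1/2" by auto
    thus ?case using fac_bound[of n z] by simp
  qed
qed

lemma convergent: "norm z < 1 \<Longrightarrow> convergent_prod (\<lambda>n. fac n z)"
  using abs_convergent abs_convergent_prod_imp_convergent_prod by blast

lemma has_prod: "norm z < 1 \<Longrightarrow> (\<lambda>n. fac n z) has_prod f z"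
  using convergent unfolding f_def by (auto intro: convergent_prod_has_prod)

lemma fac_holo [holomorphic_intros]: "fac n holomorphic_on ball 0 1"
  unfolding fac_def w_def
  by (intro holomorphic_intros) (auto dest: denom_nz')

lemma fac_eq_0_iff:
  assumes "norm z < 1"
  shows "fac n z = 0 \<longleftrightarrow> z = a n"
proof -
  have nz: "1 - cnj (a n) * z \<noteq> 0" using assms by (rule denom_nz)
  have "fac n z = 0 \<longleftrightarrow> w n z = 1" by (simp add: fac_def)
  also have "\<dots> \<longleftrightarrow> of_real (1 - (norm (a n))\<^sup>2) = 1 - cnj (a n) * z"
    using nz unfolding w_def by (auto simp: field_simps)
  also have "of_real (1 - (norm (a n))\<^sup>2) = 1 - cnj (a n) * a n"
    by (subst of_real_diff, subst complex_norm_square) (simp add: mult.commute)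
  also have "(1 - cnj (a n) * a n = 1 - cnj (a n) * z) \<longleftrightarrow> cnj (a n) * a n = cnj (a n) * z"
    by auto
  also have "\<dots> \<longleftrightarrow> z = a n"
    using a_nz[of n] by auto
  finally show ?thesis .
qed

lemma zero: "norm z < 1 \<Longrightarrow> f z = 0 \<longleftrightarrow> z \<in> range a"
  using has_prod_eq_0_iff[OF has_prod, of z] fac_eq_0_iff by auto

lemma f0: "f 0 \<noteq> 0"
  using zero[of 0] a_nz by auto

lemma uniformly_convergent:
  assumes "0 \<le> r" "r < 1"
  shows "uniformly_convergent_on (cball 0 r) (\<lambda>N z. \<Prod>n<N. fac n z)"
proof (rule uniformly_convergent_on_prod')
  show "uniformly_convergent_on (cball 0 r) (\<lambda>N z. \<Sum>n<N. norm (fac n z - 1))"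
  proof (rule Weierstrass_m_test'_ev)
    show "\<forall>\<^sub>F n in sequentially. \<forall>z\<in>cball 0 r. norm (norm (fac n z - 1)) \<le> 3 * (1/2) ^ Suc n"
      using ev_small[OF assms]
    proof eventually_elim
      case (elim n)
      show ?case
      proof
        fix z :: complex assume "z \<in> cball 0 r"
        hence "norm (w n z) \<le> 1/2" using elim by auto
        thus "norm (norm (fac n z - 1)) \<le> 3 * (1/2) ^ Suc n" using fac_bound[of n z] by simp
      qed
    qed
  qed (rule summable_geo)
  show "continuous_on (cball 0 r) (fac n)" for n
    by (rule holomorphic_on_imp_continuous_on, rule holomorphic_on_subset[OF fac_holo]) (use assms in auto)
qed auto

lemma uniform_limit:
  assumes "0 \<le> r" "r < 1"
  shows "uniform_limit (cball 0 r) (\<lambda>N z. \<Prod>n<N. fac n z) f sequentially"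
proof -
  obtain g where g: "uniform_limit (cball 0 r) (\<lambda>N z. \<Prod>n<N. fac n z) g sequentially"
    using uniformly_convergent[OF assms] by (auto simp: uniformly_convergent_on_def)
  also have "?this \<longleftrightarrow> uniform_limit (cball 0 r) (\<lambda>N z. \<Prod>n<N. fac n z) f sequentially"
  proof (intro uniform_limit_cong)
    fix z :: complex assume z: "z \<in> cball 0 r"
    have "(\<lambda>N. \<Prod>k<N. fac k z) \<longlonglongrightarrow> g z"
      by (rule tendsto_uniform_limitI[OF g z])
    moreover have "(\<lambda>N. \<Prod>k<N. fac k z) \<longlonglongrightarrow> f z"
      using z assms by (intro has_prod_imp_tendsto' has_prod) auto
    ultimately show "g z = f z"
      by (rule LIMSEQ_unique)
  qed auto
  finally show ?thesis .
qed

lemma holomorphic: "f holomorphic_on ball 0 1"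
proof (rule holomorphic_uniform_sequence[where f = "\<lambda>N z. \<Prod>n<N. fac n z"])
  fix N show "(\<lambda>z. \<Prod>n<N. fac n z) holomorphic_on ball 0 1"
    by (intro holomorphic_intros)
next
  fix x :: complex assume x: "x \<in> ball 0 1"
  define d where "d = (1 - norm x) / 2"
  have d: "d > 0" using x by (simp add: d_def)
  have sub: "cball x d \<subseteq> cball 0 ((1 + norm x) / 2)"
  proof
    fix y assume "y \<in> cball x d"
    hence "norm y \<le> norm x + d" using norm_triangle_ineq2[of y x] by (auto simp: dist_norm norm_minus_commute)
    hence "norm y \<le> (1 + norm x) / 2" unfolding d_def by (simp add: field_simps)
    thus "y \<in> cball 0 ((1 + norm x) / 2)" by simp
  qed
  also have "\<dots> \<subseteq> ball 0 1" using x by auto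
  finally have sub2: "cball x d \<subseteq> ball 0 1" .
  have "uniform_limit (cball 0 ((1 + norm x) / 2)) (\<lambda>N z. \<Prod>n<N. fac n z) f sequentially"
    using x by (intro uniform_limit) auto
  hence "uniform_limit (cball x d) (\<lambda>N z. \<Prod>n<N. fac n z) f sequentially"
    by (rule uniform_limit_on_subset) (rule sub)
  thus "\<exists>d>0. cball x d \<subseteq> ball 0 1 \<and> uniform_limit (cball x d) (\<lambda>N z. \<Prod>n<N. fac n z) f sequentially"
    using d sub2 by blast
qed auto


lemma finite_occs: "norm z < 1 \<Longrightarrow> finite (a -` {z})"
proof -
  assume z: "norm z < 1"
  have "eventually (\<lambda>n. norm (a n) > norm z) sequentially"
    using order_tendstoD(1)[OF a_lim z] .
  then obtain N where N: "\<And>n. n \<ge> N \<Longrightarrow> norm (a n) > norm z"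
    by (auto simp: eventually_at_top_linorder)
  have "a -` {z} \<subseteq> {..<N}"
    using N by (force simp: not_less[symmetric])
  thus ?thesis using finite_subset by blast
qed

definition q :: "nat \<Rightarrow> complex \<Rightarrow> complex" where
  "q n z = - cnj (a n) / (1 - cnj (a n) * z) * exp (\<Sum>k=1..p n. w n z ^ k / of_nat k)"

lemma fac_factor:
  assumes "norm z < 1"
  shows "fac n z = q n z * (z - a n)"
proof -
  have nz: "1 - cnj (a n) * z \<noteq> 0" using assms by (rule denom_nz)
  have sq: "of_real (1 - (norm (a n))\<^sup>2) = 1 - cnj (a n) * a n"
    by (subst of_real_diff, subst complex_norm_square) (simp add: mult.commute)
  have "1 - w n z = - cnj (a n) / (1 - cnj (a n) * z) * (z - a n)"
    unfolding w_def sq using nz by (simp add: field_simps)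
  thus ?thesis
    by (simp add: fac_def q_def weierstrass_factor_def)
qed

lemma q_holo [holomorphic_intros]: "q n holomorphic_on ball 0 1"
  unfolding q_def w_def
  by (intro holomorphic_intros) (auto dest: denom_nz')

lemma q_nz: "q n (a n) \<noteq> 0"
  using a_nz[of n] denom_nz[of "a n" n] a_in[of n] by (simp add: q_def)

lemma zorder_fac: "zorder (fac n) (a n) = 1"
proof (rule zorder_eqI[where S = "ball 0 1" and g = "q n"])
  show "a n \<in> ball 0 1" using a_in[of n] by simp
  fix x :: complex assume "x \<in> ball 0 1"
  thus "fac n x = q n x * (x - a n) powi 1"
    using fac_factor[of x n] by simp
qed (auto simp: q_nz intro: q_holo)

lemma zorder:
  assumes z: "norm z < 1"
  shows "zorder f z = card (a -` {z})"
proof -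
  obtain N where N: "a -` {z} \<subseteq> {..N}"
    using finite_occs[OF z] by (meson finite_nat_iff_bounded_le)
  define h1 where "h1 = (\<lambda>w. (\<Prod>n\<in>{..N} - a-`{z}. fac n w) * (\<Prod>n. fac (n + Suc N) w))"
  define h2 where "h2 = (\<lambda>w. (\<Prod>n\<in>{..N} \<inter> a-`{z}. fac n w))"

  interpret t: disc_product "\<lambda>n. a (n + Suc N)" "\<lambda>n. p (n + Suc N)"
  proof
    show "(\<lambda>n. norm (a (n + Suc N))) \<longlonglongrightarrow> 1"
      using LIMSEQ_ignore_initial_segment[OF a_lim, of "Suc N"] .
    fix n show "n \<le> p (n + Suc N)" using p_ge[of "n + Suc N"] by simp
  qed (auto simp: a_nz a_in)
  have tfac: "t.fac n = fac (n + Suc N)" for n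
    unfolding t.fac_def t.w_def fac_def w_def by simp
  have tf: "t.f w = (\<Prod>n. fac (n + Suc N) w)" for w
    unfolding t.f_def tfac by (rule refl)

  have f_eq: "f x = h1 x * h2 x" if x: "norm x < 1" for x
  proof -
    have "f x = (\<Prod>n<Suc N. fac n x) * (\<Prod>n. fac (n + Suc N) x)"
    proof (rule has_prod_unique2)
      show "(\<lambda>n. fac n x) has_prod ((\<Prod>n<Suc N. fac n x) * (\<Prod>n. fac (n + Suc N) x))"
        by (intro has_prod_ignore_initial_segment' convergent x)
      show "(\<lambda>n. fac n x) has_prod f x"
        by (rule has_prod[OF x])
    qed 
    also have "{..<Suc N} = ({..N} - a-`{z}) \<union> ({..N} \<inter> a-`{z})"
      by auto
    also have "(\<Prod>k\<in>\<dots>. fac k x) = (\<Prod>k\<in>{..N} - a-`{z}. fac k x) * (\<Prod>k\<in>{..N} \<inter> a-`{z}. fac k x)"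
      by (intro prod.union_disjoint) auto
    finally show ?thesis
      by (simp add: h1_def h2_def mult_ac)
  qed

  have ev_ball: "eventually (\<lambda>x. x \<in> ball 0 1) (at z)"
    using z by (intro eventually_at_in_open') auto
  have ev_ball': "eventually (\<lambda>x. x \<in> ball 0 1) (nhds z)"
    using z by (intro eventually_nhds_in_open) auto

  have h1_holo: "h1 holomorphic_on ball 0 1"
  proof -
    have "(\<lambda>w. (\<Prod>n\<in>{..N} - a-`{z}. fac n w) * t.f w) holomorphic_on ball 0 1"
      by (intro holomorphic_intros t.holomorphic)
    moreover have "h1 = (\<lambda>w. (\<Prod>n\<in>{..N} - a-`{z}. fac n w) * t.f w)"
      unfolding h1_def tf by (rule refl)
    ultimately show ?thesis by simp
  qed
  have ana_h1: "h1 analytic_on {z}"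
    using h1_holo z analytic_at by (metis mem_ball_0 open_ball)
  have ana_h2: "h2 analytic_on {z}"
  proof -
    have "h2 holomorphic_on ball 0 1"
      unfolding h2_def by (intro holomorphic_intros)
    thus ?thesis using z analytic_at by (metis mem_ball_0 open_ball)
  qed
  have ana_f: "f analytic_on {z}"
    using holomorphic z analytic_at by (metis mem_ball_0 open_ball)

  have ev_nz: "eventually (\<lambda>w. f w \<noteq> 0) (at z)"
  proof -
    have "\<forall>\<^sub>F w in at z. f w \<noteq> 0 \<and> w \<in> ball 0 1"
      by (rule non_zero_neighbour_alt[OF holomorphic open_ball connected_ball _ _ f0]) (use z in auto)
    thus ?thesis by eventually_elim auto
  qed

  have "zorder f z = zorder (\<lambda>w. h1 w * h2 w) z"
  proof (rule zorder_cong)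
    show "eventually (\<lambda>x. f x = h1 x * h2 x) (at z)"
      using ev_ball by eventually_elim (auto intro: f_eq)
  qed auto
  also have "\<dots> = zorder h1 z + zorder h2 z"
  proof (rule zorder_times_analytic[OF ana_h1 ana_h2])
    show "eventually (\<lambda>w. h1 w * h2 w \<noteq> 0) (at z)"
      using ev_nz ev_ball by eventually_elim (auto simp: f_eq)
  qed
  also have "zorder h2 z = (\<Sum>n\<in>{..N} \<inter> a -` {z}. zorder (fac n) z)"
    unfolding h2_def
  proof (rule zorder_prod_analytic)
    fix n show "fac n analytic_on {z}"
      using fac_holo z analytic_at by (metis mem_ball_0 open_ball)
    show "eventually (\<lambda>w. (\<Prod>n\<in>{..N} \<inter> a -` {z}. fac n w) \<noteq> 0) (at z)"
      using ev_nz ev_ball by eventually_elim (auto simp: f_eq h2_def)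
  qed
  also have "h1 z \<noteq> 0"
  proof -
    have "t.f z \<noteq> 0"
      using t.zero[OF z] N by auto
    moreover have "(\<Prod>n\<in>{..N} - a-`{z}. fac n z) \<noteq> 0"
      using fac_eq_0_iff[OF z] by auto
    ultimately show ?thesis unfolding h1_def tf[symmetric] by simp
  qed
  hence "zorder h1 z = 0"
    by (intro zorder_eq_0I ana_h1)
  also have "(\<Sum>n\<in>{..N} \<inter> a -` {z}. zorder (fac n) z) = (\<Sum>n\<in>{..N} \<inter> a -` {z}. 1)"
  proof (intro sum.cong refl)
    fix n assume "n \<in> {..N} \<inter> a -` {z}"
    hence "z = a n" by auto
    thus "zorder (fac n) z = 1" using zorder_fac by simp
  qed
  also have "\<dots> = card ({..N} \<inter> a -` {z})"
    by simp
  also have "{..N} \<inter> a -` {z} = a -` {z}"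
    using N by blast
  finally show ?thesis
    by simp
qed

end


lemma zorder_lin_power:
  "zorder (\<lambda>\<zeta>. (\<zeta> - w) ^ k) z = (if z = w then int k else 0)"
proof (cases "z = w")
  case True
  have "zorder (\<lambda>\<zeta>. (\<zeta> - w) ^ k) z = int k"
    by (rule zorder_eqI[where S = UNIV and g = "\<lambda>_. 1"]) (auto simp: True power_int_of_nat)
  thus ?thesis using True by simp
next
  case False
  have "zorder (\<lambda>\<zeta>. (\<zeta> - w) ^ k) z = 0"
    using False by (intro zorder_eq_0I) (auto intro!: analytic_intros)
  thus ?thesis using False by simp
qed

lemma ev_not_in_finite:
  fixes S :: "complex set"
  assumes "finite S"
  shows "eventually (\<lambda>x. x \<notin> S) (at z)"
proof -
  have "\<not> z islimpt S" using islimpt_finite[OF assms] .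
  thus ?thesis
    by (auto simp: islimpt_iff_eventually)
qed

lemma disc_divisor_finite:
  fixes d :: "complex \<Rightarrow> nat"
  assumes fin: "finite {z\<in>ball 0 1. d z > 0}"
  obtains v where "v holomorphic_on ball 0 1"
    "\<And>z. z \<in> ball 0 1 \<Longrightarrow> zorder v z = d z"
    "\<And>z. z \<in> ball 0 1 \<Longrightarrow> v z = 0 \<longleftrightarrow> d z > 0"
proof -
  define Z where "Z = {z\<in>ball 0 1. d z > 0}"
  define v where "v = (\<lambda>\<zeta>. \<Prod>w\<in>Z. (\<zeta> - w) ^ d w)"
  have finZ: "finite Z" using fin by (simp add: Z_def)
  have v0: "v \<zeta> = 0 \<longleftrightarrow> \<zeta> \<in> Z" for \<zeta>
    using finZ by (auto simp: v_def Z_def)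
  show ?thesis
  proof (rule that[of v])
    show "v holomorphic_on ball 0 1"
      unfolding v_def by (intro holomorphic_intros)
  next
    fix z :: complex assume z: "z \<in> ball 0 1"
    show "v z = 0 \<longleftrightarrow> d z > 0" using z by (simp add: v0 Z_def)
    have "zorder v z = (\<Sum>w\<in>Z. zorder (\<lambda>\<zeta>. (\<zeta> - w) ^ d w) z)"
      unfolding v_def
    proof (rule zorder_prod_analytic)
      show "(\<lambda>\<zeta>. (\<zeta> - w) ^ d w) analytic_on {z}" for w
        by (intro analytic_intros)
      show "eventually (\<lambda>\<zeta>. (\<Prod>w\<in>Z. (\<zeta> - w) ^ d w) \<noteq> 0) (at z)"
        using ev_not_in_finite[OF finite_Diff[OF finZ], of "{z}" z] eventually_neq_at_within[of z z UNIV]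
        by eventually_elim (use v0 in \<open>auto simp: v_def\<close>)
    qed
    also have "\<dots> = (\<Sum>w\<in>Z. if z = w then int (d w) else 0)"
      by (simp add: zorder_lin_power)
    also have "\<dots> = (if z \<in> Z then int (d z) else 0)"
      using finZ by (simp add: sum.delta)
    also have "\<dots> = d z" using z by (auto simp: Z_def)
    finally show "zorder v z = d z" .
  qed
qed


lemma disc_divisor:
  fixes F :: "complex \<Rightarrow> complex" and d :: "complex \<Rightarrow> nat"
  assumes F: "F holomorphic_on ball 0 1" and z0: "z0 \<in> ball 0 1" "F z0 \<noteq> 0"
  assumes dF: "\<And>z. z \<in> ball 0 1 \<Longrightarrow> d z > 0 \<Longrightarrow> F z = 0"
  obtains v where "v holomorphic_on ball 0 1"
    "\<And>z. z \<in> ball 0 1 \<Longrightarrow> zorder v z = d z"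
    "\<And>z. z \<in> ball 0 1 \<Longrightarrow> v z = 0 \<longleftrightarrow> d z > 0"
proof (cases "finite {z\<in>ball 0 1. d z > 0}")
  case True
  from disc_divisor_finite[OF True] that show ?thesis by metis
next
  case False
  define Z where "Z = {z\<in>ball 0 1. z \<noteq> 0 \<and> d z > 0}"
  have "{z\<in>ball 0 1. d z > 0} \<subseteq> insert 0 Z" by (auto simp: Z_def)
  hence infZ: "infinite Z" using False finite_subset by auto
  then obtain z1 where z1: "z1 \<in> Z" by (metis finite.emptyI ex_in_conv)
  have Fnc: "\<not> F constant_on ball 0 1"
  proof
    assume "F constant_on ball 0 1"
    then obtain c where c: "\<And>z. z \<in> ball 0 1 \<Longrightarrow> F z = c" by (auto simp: constant_on_def)
    have "F z1 = 0" using z1 dF by (auto simp: Z_def)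
    thus False using c[of z1] c[of z0] z0 z1 by (auto simp: Z_def)
  qed
  have finK: "finite (Z \<inter> cball 0 r)" if r: "r < 1" for r
  proof -
    have "finite {z\<in>cball 0 r. F z = 0}"
      by (rule holomorphic_compact_finite_zeros[OF F open_ball connected_ball compact_cball _ Fnc])
         (use r in auto)
    moreover have "Z \<inter> cball 0 r \<subseteq> {z\<in>cball 0 r. F z = 0}"
      using dF by (auto simp: Z_def)
    ultimately show ?thesis using finite_subset by blast
  qed
  define \<phi> where "\<phi> = (\<lambda>z::complex. complex_of_real (1 / (1 - norm z)) * z)"
  define \<psi> where "\<psi> = (\<lambda>w::complex. complex_of_real (1 / (1 + norm w)) * w)"
  have norm\<phi>: "norm (\<phi> z) = norm z / (1 - norm z)" if "norm z < 1" for z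
  proof -
    have "norm (\<phi> z) = \<bar>1 / (1 - norm z)\<bar> * norm z" by (simp only: \<phi>_def norm_mult norm_of_real)
    also have "\<bar>1 / (1 - norm z)\<bar> = 1 / (1 - norm z)"
      by (intro abs_of_nonneg) (use that in simp)
    finally show ?thesis by simp
  qed
  have norm\<psi>: "norm (\<psi> w) = norm w / (1 + norm w)" for w
  proof -
    have "norm (\<psi> w) = \<bar>1 / (1 + norm w)\<bar> * norm w" by (simp only: \<psi>_def norm_mult norm_of_real)
    also have "\<bar>1 / (1 + norm w)\<bar> = 1 / (1 + norm w)"
      by (intro abs_of_nonneg) (auto intro: add_nonneg_nonneg)
    finally show ?thesis by simp
  qed
  have \<psi>\<phi>: "\<psi> (\<phi> z) = z" if z: "norm z < 1" for z
  proof -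
    have "1 + norm z / (1 - norm z) = 1 / (1 - norm z)"
      using z by (simp add: field_simps)
    hence e: "1 / (1 + norm (\<phi> z)) = 1 - norm z" using norm\<phi>[OF z] by simp
    have "\<psi> (\<phi> z) = complex_of_real (1 / (1 + norm (\<phi> z))) * (complex_of_real (1 / (1 - norm z)) * z)"
      by (simp only: \<psi>_def \<phi>_def)
    also have "\<dots> = complex_of_real ((1 - norm z) * (1 / (1 - norm z))) * z"
      by (simp only: e of_real_mult mult.assoc)
    also have "(1 - norm z) * (1 / (1 - norm z)) = 1" using z by simp
    finally show ?thesis by simp
  qed
  have \<psi>_in: "norm (\<psi> w) < 1" for w
    unfolding norm\<psi> by (simp add: add_pos_nonneg)
  define A where "A = \<phi> ` Z"
  define c where "c = (\<lambda>w. d (\<psi> w))"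
  have inj: "inj_on \<phi> Z"
    by (rule inj_on_inverseI[where g = \<psi>]) (auto simp: Z_def \<psi>\<phi>)
  have infA: "infinite A"
    unfolding A_def using infZ finite_imageD[OF _ inj] by blast
  have finA: "finite (A \<inter> cball 0 R)" if R: "R \<ge> 0" for R
  proof -
    have "A \<inter> cball 0 R \<subseteq> \<phi> ` (Z \<inter> cball 0 (R / (1 + R)))"
    proof
      fix w assume "w \<in> A \<inter> cball 0 R"
      then obtain z where z: "z \<in> Z" "w = \<phi> z" "norm (\<phi> z) \<le> R" by (auto simp: A_def)
      have z1: "norm z < 1" using z by (auto simp: Z_def)
      hence "norm z / (1 - norm z) \<le> R" using z norm\<phi> by simp
      hence "norm z \<le> R * (1 - norm z)" using z1 by (simp add: field_simps)
      hence "norm z * (1 + R) \<le> R" by (simp add: algebra_simps)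
      hence "norm z \<le> R / (1 + R)" using R by (simp add: field_simps)
      thus "w \<in> \<phi> ` (Z \<inter> cball 0 (R / (1 + R)))" using z by auto
    qed
    moreover have "finite (Z \<inter> cball 0 (R / (1 + R)))"
      by (rule finK) (use R in \<open>simp add: field_simps\<close>)
    ultimately show ?thesis using finite_subset by blast
  qed
  have closedA: "closed A"
    unfolding closed_limpt
  proof (intro allI impI)
    fix x assume x: "x islimpt A"
    define R where "R = norm x + 1"
    have "A = (A \<inter> cball 0 R) \<union> (A - cball 0 R)" by blast
    with x have "x islimpt (A \<inter> cball 0 R) \<or> x islimpt (A - cball 0 R)"
      by (metis islimpt_Un)
    moreover have "\<not> x islimpt (A \<inter> cball 0 R)"
      by (rule islimpt_finite, rule finA) (simp add: R_def)
    ultimately have "x islimpt (A - cball 0 R)" by blast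
    hence "x islimpt {y. R \<le> norm y}"
      by (rule islimpt_subset) auto
    moreover have "closed {y::complex. R \<le> norm y}"
      by (intro closed_Collect_le continuous_intros)
    ultimately have "R \<le> norm x" using closed_limpt by blast
    thus "x \<in> A" by (simp add: R_def)
  qed
  have cpos: "c w > 0" if "w \<in> A" for w
    using that by (auto simp: A_def c_def Z_def \<psi>\<phi>)
  obtain s :: "nat \<Rightarrow> complex" where s:
    "range s = A" "filterlim s at_infinity at_top"
    "\<And>w. w \<in> A \<Longrightarrow> finite (s -` {w}) \<and> card (s -` {w}) = c w"
    using sequence_of_sparse_set_exists'[of A c, OF infA closedA finA cpos] by metis
  define a where "a = (\<lambda>n. \<psi> (s n))"
  have aZ: "a n \<in> Z" for n
  proof -
    have "s n \<in> A" using s(1) by auto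
    then obtain z where "z \<in> Z" "s n = \<phi> z" by (auto simp: A_def)
    thus ?thesis by (auto simp: a_def Z_def \<psi>\<phi>)
  qed
  have rangea: "range a = Z"
  proof
    show "range a \<subseteq> Z" using aZ by auto
    show "Z \<subseteq> range a"
    proof
      fix z assume z: "z \<in> Z"
      hence "\<phi> z \<in> range s" using s(1) by (auto simp: A_def)
      then obtain n where "s n = \<phi> z" by auto
      hence "a n = z" using z by (auto simp: a_def Z_def \<psi>\<phi>)
      thus "z \<in> range a" by (metis rangeI)
    qed
  qed
  have alim: "(\<lambda>n. norm (a n)) \<longlonglongrightarrow> 1"
  proof -
    have "filterlim (\<lambda>n. 1 + norm (s n)) at_top sequentially"
      by (rule filterlim_tendsto_add_at_top[OF tendsto_const filterlim_at_infinity_imp_norm_at_top[OF s(2)]])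
    hence "(\<lambda>n. inverse (1 + norm (s n))) \<longlonglongrightarrow> 0"
      by (rule tendsto_inverse_0_at_top)
    hence "(\<lambda>n. 1 - inverse (1 + norm (s n))) \<longlonglongrightarrow> 1 - 0"
      by (intro tendsto_intros)
    moreover have "(\<lambda>n. 1 - inverse (1 + norm (s n))) = (\<lambda>n. norm (a n))"
    proof
      fix n
      have "1 + norm (s n) > 0" by (simp add: add_pos_nonneg)
      thus "1 - inverse (1 + norm (s n)) = norm (a n)"
        by (simp add: a_def norm\<psi> field_simps)
    qed
    ultimately show ?thesis by simp
  qed
  interpret P: disc_product a "\<lambda>n. n"
  proof
    show "a n \<noteq> 0" for n using aZ[of n] by (auto simp: Z_def)
    show "norm (a n) < 1" for n using aZ[of n] by (auto simp: Z_def)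
  qed (use alim in auto)
  define v where "v = (\<lambda>\<zeta>. \<zeta> ^ d 0 * P.f \<zeta>)"
  have card_a: "card (a -` {z}) = (if z \<in> Z then d z else 0)" if z: "norm z < 1" for z
  proof (cases "z \<in> Z")
    case True
    have "a -` {z} = s -` {\<phi> z}"
    proof (intro set_eqI iffI)
      fix n assume "n \<in> a -` {z}"
      hence an: "a n = z" by simp
      have "s n \<in> A" using s(1) by auto
      then obtain z' where "z' \<in> Z" "s n = \<phi> z'" by (auto simp: A_def)
      moreover have "a n = z'" using calculation by (auto simp: a_def Z_def \<psi>\<phi>)
      ultimately show "n \<in> s -` {\<phi> z}" using an by simp
    next
      fix n assume "n \<in> s -` {\<phi> z}"
      thus "n \<in> a -` {z}" using z by (simp add: a_def \<psi>\<phi>)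
    qed
    also have "card \<dots> = c (\<phi> z)"
      using s(3)[of "\<phi> z"] True by (auto simp: A_def)
    also have "\<dots> = d z" using z by (simp add: c_def \<psi>\<phi>)
    finally show ?thesis using True by simp
  next
    case False
    hence "a -` {z} = {}" using aZ by auto
    thus ?thesis using False by simp
  qed
  show ?thesis
  proof (rule that[of v])
    show hv: "v holomorphic_on ball 0 1"
      unfolding v_def by (intro holomorphic_intros P.holomorphic)
  next
    fix z :: complex assume z: "z \<in> ball 0 1"
    have "v z = 0 \<longleftrightarrow> (z = 0 \<and> d 0 > 0) \<or> z \<in> Z"
      using P.zero[of z] z rangea by (auto simp: v_def)
    also have "\<dots> \<longleftrightarrow> d z > 0" using z by (auto simp: Z_def)
    finally show "v z = 0 \<longleftrightarrow> d z > 0" .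
  next
    fix z :: complex assume z: "z \<in> ball 0 1"
    have ana1: "(\<lambda>\<zeta>. \<zeta> ^ d 0) analytic_on {z}" by (intro analytic_intros)
    have ana2: "P.f analytic_on {z}"
      using P.holomorphic z analytic_at by (metis open_ball)
    have evf: "\<forall>\<^sub>F w in at z. P.f w \<noteq> 0 \<and> w \<in> ball 0 1"
      by (rule non_zero_neighbour_alt[OF P.holomorphic open_ball connected_ball z _ P.f0]) simp
    have "zorder v z = zorder (\<lambda>\<zeta>. \<zeta> ^ d 0) z + zorder P.f z"
      unfolding v_def
    proof (rule zorder_times_analytic[OF ana1 ana2])
      show "\<forall>\<^sub>F w in at z. w ^ d 0 * P.f w \<noteq> 0"
        using evf eventually_neq_at_within[of 0 z UNIV] by eventually_elim auto
    qed
    also have "zorder (\<lambda>\<zeta>. \<zeta> ^ d 0) z = (if z = 0 then int (d 0) else 0)"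
      using zorder_lin_power[of 0 "d 0" z] by simp
    also have "zorder P.f z = card (a -` {z})"
      using z by (intro P.zorder) simp
    also have "card (a -` {z}) = (if z \<in> Z then d z else 0)"
      using z by (intro card_a) simp
    finally show "zorder v z = d z"
      using z by (auto simp: Z_def)
  qed
qed



lemma cnj_ball: "cnj ` ball 0 1 = ball 0 1"
proof
  show "cnj ` ball 0 1 \<subseteq> ball 0 1" by auto
  show "ball 0 1 \<subseteq> cnj ` ball 0 1"
  proof
    fix z :: complex assume "z \<in> ball 0 1"
    hence "cnj z \<in> ball 0 1" by simp
    moreover have "z = cnj (cnj z)" by simp
    ultimately show "z \<in> cnj ` ball 0 1" by blast
  qed
qed

lemma reflect_holo:
  assumes "v holomorphic_on ball 0 1"
  shows "reflect v holomorphic_on ball 0 1"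
proof -
  have "cnj \<circ> v \<circ> cnj holomorphic_on ball 0 1"
    by (rule holomorphic_on_compose_cnj_cnj) (use assms cnj_ball in auto)
  moreover have "cnj \<circ> v \<circ> cnj = reflect v"
    by (auto simp: reflect_def fun_eq_iff)
  ultimately show ?thesis by simp
qed

lemma ev_nz:
  assumes "f holomorphic_on ball 0 1" "z \<in> ball 0 1" "w0 \<in> ball 0 1" "f w0 \<noteq> 0"
  shows "eventually (\<lambda>w. f w \<noteq> 0) (at z)"
proof -
  have "\<forall>\<^sub>F w in at z. f w \<noteq> 0 \<and> w \<in> ball 0 1"
    by (rule non_zero_neighbour_alt[OF assms(1) open_ball connected_ball assms(2-4)])
  thus ?thesis by eventually_elim auto
qed

lemma ana_ball: "f holomorphic_on ball 0 1 \<Longrightarrow> z \<in> ball 0 1 \<Longrightarrow> f analytic_on {z}"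
  using analytic_at by (metis open_ball)

lemma zero_iff_zorder:
  assumes "f holomorphic_on ball 0 1" "z \<in> ball 0 1" "w0 \<in> ball 0 1" "f w0 \<noteq> 0"
  shows "f z = 0 \<longleftrightarrow> zorder f z > 0"
proof -
  have "frequently (\<lambda>w. f w \<noteq> 0) (at z)"
    using ev_nz[OF assms] by (simp add: eventually_frequently)
  thus ?thesis using zorder_pos_iff[OF assms(1) open_ball assms(2)] by simp
qed

lemma zorder_nonneg:
  assumes "f holomorphic_on ball 0 1" "z \<in> ball 0 1" "w0 \<in> ball 0 1" "f w0 \<noteq> 0"
  shows "zorder f z \<ge> 0"
proof -
  have "frequently (\<lambda>w. f w \<noteq> 0) (at z)"
    using ev_nz[OF assms] by (simp add: eventually_frequently)
  thus ?thesis using zorder_ge_0 ana_ball[OF assms(1,2)] by blast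
qed

lemma exists_nz_prod:
  assumes "f holomorphic_on ball 0 1" "g holomorphic_on ball 0 1"
    "w0 \<in> ball 0 1" "f w0 \<noteq> 0" "w1 \<in> ball 0 1" "g w1 \<noteq> 0"
  shows "\<exists>w\<in>ball 0 1. f w * g w \<noteq> 0"
proof -
  have "eventually (\<lambda>w. f w \<noteq> 0) (at w0)" by (rule ev_nz) (use assms in auto)
  moreover have "eventually (\<lambda>w. g w \<noteq> 0) (at w0)" by (rule ev_nz) (use assms in auto)
  moreover have "eventually (\<lambda>w. w \<in> ball 0 1) (at w0)"
    using assms by (intro eventually_at_in_open') auto
  ultimately have "eventually (\<lambda>w. w \<in> ball 0 1 \<and> f w * g w \<noteq> 0) (at w0)"
    by eventually_elim auto
  from eventually_happens[OF this] show ?thesis by auto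
qed

lemma zorder_mult:
  assumes "f holomorphic_on ball 0 1" "g holomorphic_on ball 0 1" "z \<in> ball 0 1"
    "w0 \<in> ball 0 1" "f w0 \<noteq> 0" "w1 \<in> ball 0 1" "g w1 \<noteq> 0"
  shows "zorder (\<lambda>w. f w * g w) z = zorder f z + zorder g z"
proof (rule zorder_times_analytic)
  show "f analytic_on {z}" "g analytic_on {z}" using assms ana_ball by blast+
  have "eventually (\<lambda>w. f w \<noteq> 0) (at z)" by (rule ev_nz) (use assms in auto)
  moreover have "eventually (\<lambda>w. g w \<noteq> 0) (at z)" by (rule ev_nz) (use assms in auto)
  ultimately show "eventually (\<lambda>w. f w * g w \<noteq> 0) (at z)"
    by eventually_elim auto
qed

lemma zorder_reflect:
  assumes f: "f holomorphic_on ball 0 1" and z: "z \<in> ball 0 1" and w0: "w0 \<in> ball 0 1" "f w0 \<noteq> 0"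
  shows "zorder (reflect f) z = zorder f (cnj z)"
proof -
  define n where "n = zorder f (cnj z)"
  define g where "g = zor_poly f (cnj z)"
  have cz: "cnj z \<in> ball 0 1" using z by simp
  have "(if f (cnj z) = 0 then n > 0 else n = 0) \<and> (\<exists>r. r>0 \<and> cball (cnj z) r \<subseteq> ball 0 1 \<and> g holomorphic_on cball (cnj z) r
    \<and> (\<forall>w\<in>cball (cnj z) r. f w  = g w * (w - cnj z) ^ nat n  \<and> g w \<noteq>0))"
    unfolding n_def g_def
    by (rule zorder_exist_zero[OF f open_ball connected_ball cz]) (use w0 in auto)
  then obtain r where n0: "n \<ge> 0" and r: "r > 0" "g holomorphic_on cball (cnj z) r"
    and fg: "\<And>w. w \<in> cball (cnj z) r \<Longrightarrow> f w = g w * (w - cnj z) ^ nat n \<and> g w \<noteq> 0"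
    by (metis order.refl less_imp_le)
  have "zorder (reflect f) z = int (nat n)"
  proof (rule zorder_eqI[where S = "ball z r" and g = "cnj \<circ> g \<circ> cnj"])
    show "open (ball z r)" "z \<in> ball z r" using r by auto
    have sub: "cnj ` ball z r \<subseteq> cball (cnj z) r"
      by (auto simp: dist_norm complex_cnj_diff[symmetric] simp del: complex_cnj_diff)
    show "cnj \<circ> g \<circ> cnj holomorphic_on ball z r"
      by (rule holomorphic_on_compose_cnj_cnj) (use holomorphic_on_subset[OF r(2) sub] in auto)
    show "(cnj \<circ> g \<circ> cnj) z \<noteq> 0" using fg[of "cnj z"] r by simp
    fix w assume w: "w \<in> ball z r" "w \<noteq> z"
    have "cnj w \<in> cball (cnj z) r" by (intro subsetD[OF sub] imageI w(1))
    hence "f (cnj w) = g (cnj w) * (cnj w - cnj z) ^ nat n" using fg by blast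
    hence "reflect f w = cnj (g (cnj w)) * (w - z) ^ nat n"
      by (simp add: reflect_def)
    thus "reflect f w = (cnj \<circ> g \<circ> cnj) w * (w - z) powi int (nat n)"
      unfolding power_int_of_nat o_def .
  qed
  thus ?thesis using n0 by (simp add: n_def)
qed

lemma limpt_reals: "(0::complex) islimpt (complex_of_real ` {-1<..<1})"
  unfolding islimpt_approachable
proof (intro allI impI)
  fix e :: real assume e: "e > 0"
  define x where "x = min (e/2) (1/2)"
  have x: "0 < x" "x < 1" "x < e" using e by (auto simp: x_def)
  show "\<exists>x'\<in>complex_of_real ` {-1<..<1}. x' \<noteq> 0 \<and> dist x' 0 < e"
    by (rule bexI[of _ "complex_of_real x"]) (use x in auto)
qed

lemma ident_reals:
  assumes "f holomorphic_on ball 0 1" "g holomorphic_on ball 0 1"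
    "\<And>x. -1 < x \<Longrightarrow> x < 1 \<Longrightarrow> f (complex_of_real x) = g (complex_of_real x)"
    "z \<in> ball 0 1"
  shows "f z = g z"
proof -
  have "(\<lambda>z. f z - g z) z = 0"
  proof (rule analytic_continuation[of "\<lambda>z. f z - g z" "ball 0 1" "complex_of_real ` {-1<..<1}" 0 z, OF _ open_ball connected_ball _ _ limpt_reals])
    show "(\<lambda>z. f z - g z) holomorphic_on ball 0 1" using assms by (intro holomorphic_intros)
    show "complex_of_real ` {-1<..<1} \<subseteq> ball 0 1" by auto
    show "(0::complex) \<in> ball 0 1" by simp
    show "\<And>x. x \<in> complex_of_real ` {-1<..<1} \<Longrightarrow> f x - g x = 0" using assms(3) by auto
  qed (use assms in auto)
  thus ?thesis by simp
qed

lemma ident_mult: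
  assumes "f holomorphic_on ball 0 1" "P holomorphic_on ball 0 1"
    "\<And>z. z \<in> ball 0 1 \<Longrightarrow> f z * P z = 0" "w0 \<in> ball 0 1" "P w0 \<noteq> 0"
    "z \<in> ball 0 1"
  shows "f z = 0"
proof -
  define S where "S = ball 0 1 \<inter> P -` (-{0})"
  have oS: "open S" unfolding S_def
    by (rule continuous_open_preimage) (use assms(2) holomorphic_on_imp_continuous_on in auto)
  have neS: "S \<noteq> {}" using assms by (auto simp: S_def)
  have "f z = (\<lambda>_. 0) z"
    by (rule analytic_continuation_open[of S "ball 0 1" f "\<lambda>_. 0", OF oS open_ball neS connected_ball])
       (use assms in \<open>auto simp: S_def\<close>)
  thus ?thesis by simp
qed


theorem corollary3p3:
  fixes F G :: "complex \<Rightarrow> complex"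
  assumes "F \<in> hardy2" and "G \<in> hardy2"
  shows "(\<forall>x::real. -1 < x \<and> x < 1 \<longrightarrow> cmod (F (complex_of_real x)) = cmod (G (complex_of_real x)))
     \<longleftrightarrow> (\<exists>u v. u holomorphic_on ball 0 1 \<and> v holomorphic_on ball 0 1 \<and>
            (\<forall>z\<in>ball 0 1. F z = u z * v z \<and> G z = u z * reflect v z))"
proof
  assume "\<exists>u v. u holomorphic_on ball 0 1 \<and> v holomorphic_on ball 0 1 \<and>
            (\<forall>z\<in>ball 0 1. F z = u z * v z \<and> G z = u z * reflect v z)"
  then obtain u v where uv: "\<forall>z\<in>ball 0 1. F z = u z * v z \<and> G z = u z * reflect v z" by blast
  show "\<forall>x::real. -1 < x \<and> x < 1 \<longrightarrow> cmod (F (complex_of_real x)) = cmod (G (complex_of_real x))"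
  proof (intro allI impI)
    fix x :: real assume x: "-1 < x \<and> x < 1"
    hence xb: "complex_of_real x \<in> ball 0 1" by auto
    have "reflect v (complex_of_real x) = cnj (v (complex_of_real x))"
      by (simp add: reflect_def)
    thus "cmod (F (complex_of_real x)) = cmod (G (complex_of_real x))"
      using uv xb by (simp add: norm_mult)
  qed
next
  assume H: "\<forall>x::real. -1 < x \<and> x < 1 \<longrightarrow> cmod (F (complex_of_real x)) = cmod (G (complex_of_real x))"
  have hF: "F holomorphic_on ball 0 1" and hG: "G holomorphic_on ball 0 1"
    using assms by (auto simp: hardy2_def)
  show "\<exists>u v. u holomorphic_on ball 0 1 \<and> v holomorphic_on ball 0 1 \<and>
            (\<forall>z\<in>ball 0 1. F z = u z * v z \<and> G z = u z * reflect v z)"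
  proof (cases "\<forall>z\<in>ball 0 1. F z = 0")
    case True
    have G0: "G z = 0" if "z \<in> ball 0 1" for z
    proof (rule ident_reals[OF hG holomorphic_on_const _ that])
      fix x :: real assume "-1 < x" "x < 1"
      thus "G (complex_of_real x) = 0" using H True by auto
    qed
    show ?thesis
      by (rule exI[of _ "\<lambda>_. 0"], rule exI[of _ "\<lambda>_. 1"]) (use True G0 in auto)
  next
    case False
    then obtain z0 where z0: "z0 \<in> ball 0 1" "F z0 \<noteq> 0" by auto
    have "\<not> (\<forall>z\<in>ball 0 1. G z = 0)"
    proof
      assume G0: "\<forall>z\<in>ball 0 1. G z = 0"
      have "F z0 = 0"
      proof (rule ident_reals[OF hF holomorphic_on_const _ z0(1)])
        fix x :: real assume "-1 < x" "x < 1"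
        thus "F (complex_of_real x) = 0" using H G0 by auto
      qed
      thus False using z0 by simp
    qed
    then obtain z1 where z1: "z1 \<in> ball 0 1" "G z1 \<noteq> 0" by auto
    define RF where "RF = reflect F"
    define RG where "RG = reflect G"
    have hRF: "RF holomorphic_on ball 0 1" unfolding RF_def by (rule reflect_holo[OF hF])
    have hRG: "RG holomorphic_on ball 0 1" unfolding RG_def by (rule reflect_holo[OF hG])
    have cz0: "cnj z0 \<in> ball 0 1" "RF (cnj z0) \<noteq> 0" using z0 by (auto simp: RF_def reflect_def)
    have cz1: "cnj z1 \<in> ball 0 1" "RG (cnj z1) \<noteq> 0" using z1 by (auto simp: RG_def reflect_def)
    have FFGG: "F z * RF z = G z * RG z" if z: "z \<in> ball 0 1" for z
    proof (rule ident_reals[where f = "\<lambda>z. F z * RF z" and g = "\<lambda>z. G z * RG z", OF _ _ _ z])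
      show "(\<lambda>z. F z * RF z) holomorphic_on ball 0 1" by (intro holomorphic_intros hF hRF)
      show "(\<lambda>z. G z * RG z) holomorphic_on ball 0 1" by (intro holomorphic_intros hG hRG)
      fix x :: real assume x: "-1 < x" "x < 1"
      have "F (complex_of_real x) * RF (complex_of_real x) = of_real ((cmod (F (complex_of_real x)))\<^sup>2)"
        unfolding RF_def reflect_def by (simp only: complex_cnj_complex_of_real complex_norm_square)
      also have "\<dots> = of_real ((cmod (G (complex_of_real x)))\<^sup>2)" using H x by simp
      also have "\<dots> = G (complex_of_real x) * RG (complex_of_real x)"
        unfolding RG_def reflect_def by (simp only: complex_cnj_complex_of_real complex_norm_square)
      finally show "F (complex_of_real x) * RF (complex_of_real x) = G (complex_of_real x) * RG (complex_of_real x)" .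
    qed
    define oF where "oF = zorder F"
    define oG where "oG = zorder G"
    have oF0: "oF z \<ge> 0" if "z \<in> ball 0 1" for z
      unfolding oF_def by (rule zorder_nonneg[OF hF that z0])
    have oG0: "oG z \<ge> 0" if "z \<in> ball 0 1" for z
      unfolding oG_def by (rule zorder_nonneg[OF hG that z1])
    have oRF: "zorder RF z = oF (cnj z)" if "z \<in> ball 0 1" for z
      unfolding RF_def oF_def by (rule zorder_reflect[OF hF that z0])
    have oRG: "zorder RG z = oG (cnj z)" if "z \<in> ball 0 1" for z
      unfolding RG_def oG_def by (rule zorder_reflect[OF hG that z1])
    have orel: "oF z + oF (cnj z) = oG z + oG (cnj z)" if z: "z \<in> ball 0 1" for z
    proof -
      have "oF z + oF (cnj z) = zorder (\<lambda>w. F w * RF w) z"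
        using zorder_mult[OF hF hRF z z0 cz0] oRF[OF z] by (simp add: oF_def)
      also have "\<dots> = zorder (\<lambda>w. G w * RG w) z"
      proof (rule zorder_cong)
        have "eventually (\<lambda>w. w \<in> ball 0 1) (at z)" using z by (intro eventually_at_in_open') auto
        thus "eventually (\<lambda>w. F w * RF w = G w * RG w) (at z)"
          by eventually_elim (rule FFGG)
      qed auto
      also have "\<dots> = oG z + oG (cnj z)"
        using zorder_mult[OF hG hRG z z1 cz1] oRG[OF z] by (simp add: oG_def)
      finally show ?thesis .
    qed
    define dv where "dv = (\<lambda>z. nat (oF z - oG z))"
    define du where "du = (\<lambda>z. nat (min (oF z) (oG z)))"
    have Fnz_o: "oF z = 0" if "z \<in> ball 0 1" "F z \<noteq> 0" for z
      using zero_iff_zorder[OF hF that(1) z0] oF0[OF that(1)] that by (simp add: oF_def)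
    have Fz_o: "F z = 0" if "z \<in> ball 0 1" "oF z > 0" for z
      using zero_iff_zorder[OF hF that(1) z0] that by (simp add: oF_def)
    obtain v0 where v0: "v0 holomorphic_on ball 0 1" "\<And>z. z \<in> ball 0 1 \<Longrightarrow> zorder v0 z = dv z"
      "\<And>z. z \<in> ball 0 1 \<Longrightarrow> v0 z = 0 \<longleftrightarrow> dv z > 0"
    proof (rule disc_divisor[OF hF z0])
      fix z assume z: "z \<in> ball 0 1" "dv z > 0"
      thus "F z = 0" using Fz_o[OF z(1)] oG0[OF z(1)] by (auto simp: dv_def)
    qed blast
    obtain u0 where u0: "u0 holomorphic_on ball 0 1" "\<And>z. z \<in> ball 0 1 \<Longrightarrow> zorder u0 z = du z"
      "\<And>z. z \<in> ball 0 1 \<Longrightarrow> u0 z = 0 \<longleftrightarrow> du z > 0"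
    proof (rule disc_divisor[OF hF z0])
      fix z assume z: "z \<in> ball 0 1" "du z > 0"
      thus "F z = 0" using Fz_o[OF z(1)] by (auto simp: du_def)
    qed blast
    have v0z0: "v0 z0 \<noteq> 0" using v0(3)[OF z0(1)] Fnz_o[OF z0] oG0[OF z0(1)] by (simp add: dv_def)
    have u0z0: "u0 z0 \<noteq> 0" using u0(3)[OF z0(1)] Fnz_o[OF z0] by (simp add: du_def)
    define RV where "RV = reflect v0"
    have hRV: "RV holomorphic_on ball 0 1" unfolding RV_def by (rule reflect_holo[OF v0(1)])
    have czv: "cnj z0 \<in> ball 0 1" "RV (cnj z0) \<noteq> 0" using z0 v0z0 by (auto simp: RV_def reflect_def)
    have oRV: "zorder RV z = dv (cnj z)" if "z \<in> ball 0 1" for z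
      unfolding RV_def using zorder_reflect[OF v0(1) that z0(1) v0z0] v0(2)[of "cnj z"] that by simp

    have hGv: "(\<lambda>z. G z * v0 z) holomorphic_on ball 0 1" by (intro holomorphic_intros hG v0(1))
    have hFRV: "(\<lambda>z. F z * RV z) holomorphic_on ball 0 1" by (intro holomorphic_intros hF hRV)
    obtain nz1 where nz1: "nz1 \<in> ball 0 1" "G nz1 * v0 nz1 \<noteq> 0"
      using exists_nz_prod[OF hG v0(1) z1 z0(1) v0z0] by blast
    obtain nz2 where nz2: "nz2 \<in> ball 0 1" "F nz2 * RV nz2 \<noteq> 0"
      using exists_nz_prod[OF hF hRV z0 czv] by blast
    have ord1: "zorder (\<lambda>z. F z * RV z) z = zorder (\<lambda>z. G z * v0 z) z" if z: "z \<in> ball 0 1" for z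
    proof -
      have "zorder (\<lambda>z. F z * RV z) z = oF z + int (dv (cnj z))"
        using zorder_mult[OF hF hRV z z0 czv] oRV[OF z] by (simp add: oF_def)
      also have "\<dots> = oG z + int (dv z)"
        using orel[OF z] oF0[OF z] oG0[OF z] oF0[of "cnj z"] oG0[of "cnj z"] z
        by (simp add: dv_def)
      also have "\<dots> = zorder (\<lambda>z. G z * v0 z) z"
        using zorder_mult[OF hG v0(1) z z1 z0(1) v0z0] v0(2)[OF z] by (simp add: oG_def)
      finally show ?thesis .
    qed
    obtain \<phi> where \<phi>: "\<phi> holomorphic_on ball 0 1" "\<And>z. z \<in> ball 0 1 \<Longrightarrow> \<phi> z \<noteq> 0"
      "\<And>z. z \<in> ball 0 1 \<Longrightarrow> G z * v0 z = \<phi> z * (F z * RV z)"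
    proof (rule holomorphic_zorder_factorization[OF hGv open_ball connected_ball hFRV])
      fix z :: complex assume z: "z \<in> ball 0 1"
      show "zorder (\<lambda>z. F z * RV z) z = zorder (\<lambda>z. G z * v0 z) z" by (rule ord1[OF z])
      show "(F z * RV z = 0) = (G z * v0 z = 0)"
        using zero_iff_zorder[OF hFRV z nz2] zero_iff_zorder[OF hGv z nz1] ord1[OF z] by simp
    qed blast

    have huv: "(\<lambda>z. u0 z * v0 z) holomorphic_on ball 0 1" by (intro holomorphic_intros u0(1) v0(1))
    obtain nz3 where nz3: "nz3 \<in> ball 0 1" "u0 nz3 * v0 nz3 \<noteq> 0"
      using exists_nz_prod[OF u0(1) v0(1) z0(1) u0z0 z0(1) v0z0] by blast
    have ord2: "zorder (\<lambda>z. u0 z * v0 z) z = zorder F z" if z: "z \<in> ball 0 1" for z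
    proof -
      have "zorder (\<lambda>z. u0 z * v0 z) z = int (du z) + int (dv z)"
        using zorder_mult[OF u0(1) v0(1) z z0(1) u0z0 z0(1) v0z0] u0(2)[OF z] v0(2)[OF z] by simp
      also have "\<dots> = oF z"
        using oF0[OF z] oG0[OF z] by (simp add: du_def dv_def)
      finally show ?thesis by (simp add: oF_def)
    qed
    obtain h where h: "h holomorphic_on ball 0 1" "\<And>z. z \<in> ball 0 1 \<Longrightarrow> h z \<noteq> 0"
      "\<And>z. z \<in> ball 0 1 \<Longrightarrow> F z = h z * (u0 z * v0 z)"
    proof (rule holomorphic_zorder_factorization[OF hF open_ball connected_ball huv])
      fix z :: complex assume z: "z \<in> ball 0 1"
      show "zorder (\<lambda>z. u0 z * v0 z) z = zorder F z" by (rule ord2[OF z])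
      show "(u0 z * v0 z = 0) = (F z = 0)"
        using zero_iff_zorder[OF huv z nz3] zero_iff_zorder[OF hF z z0] ord2[OF z] by simp
    qed blast

    define R\<phi> where "R\<phi> = reflect \<phi>"
    have hR\<phi>: "R\<phi> holomorphic_on ball 0 1" unfolding R\<phi>_def by (rule reflect_holo[OF \<phi>(1)])
    have E2: "RG z * RV z = R\<phi> z * (RF z * v0 z)" if z: "z \<in> ball 0 1" for z
    proof -
      have "cnj z \<in> ball 0 1" using z by simp
      from \<phi>(3)[OF this] have "cnj (G (cnj z) * v0 (cnj z)) = cnj (\<phi> (cnj z) * (F (cnj z) * RV (cnj z)))"
        by simp
      thus ?thesis by (simp add: RG_def RV_def R\<phi>_def RF_def reflect_def)
    qed
    define P where "P = (\<lambda>z. (F z * RV z) * (RF z * v0 z))"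
    have hP: "P holomorphic_on ball 0 1" unfolding P_def by (intro holomorphic_intros hF hRV hRF v0(1))
    have hRFv: "(\<lambda>z. RF z * v0 z) holomorphic_on ball 0 1" by (intro holomorphic_intros hRF v0(1))
    obtain nz4 where nz4: "nz4 \<in> ball 0 1" "RF nz4 * v0 nz4 \<noteq> 0"
      using exists_nz_prod[OF hRF v0(1) cz0 z0(1) v0z0] by blast
    obtain nz5 where nz5: "nz5 \<in> ball 0 1" "P nz5 \<noteq> 0"
      using exists_nz_prod[OF hFRV hRFv nz2 nz4] unfolding P_def by blast
    have \<phi>R: "\<phi> z * R\<phi> z = 1" if z: "z \<in> ball 0 1" for z
    proof -
      have "(\<phi> z * R\<phi> z - 1) = 0"
      proof (rule ident_mult[OF _ hP _ nz5 z])
        show "(\<lambda>z. \<phi> z * R\<phi> z - 1) holomorphic_on ball 0 1"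
          by (intro holomorphic_intros \<phi>(1) hR\<phi>)
        fix w :: complex assume w: "w \<in> ball 0 1"
        have "\<phi> w * R\<phi> w * P w = (\<phi> w * (F w * RV w)) * (R\<phi> w * (RF w * v0 w))"
          by (simp add: P_def mult_ac)
        also have "\<dots> = (G w * v0 w) * (RG w * RV w)" using \<phi>(3)[OF w] E2[OF w] by simp
        also have "\<dots> = (G w * RG w) * v0 w * RV w" by (simp add: mult_ac)
        also have "\<dots> = (F w * RF w) * v0 w * RV w" using FFGG[OF w] by simp
        also have "\<dots> = P w" by (simp add: P_def mult_ac)
        finally show "(\<phi> w * R\<phi> w - 1) * P w = 0" by (simp add: algebra_simps)
      qed
      thus ?thesis by simp
    qed

    obtain g where g: "g holomorphic_on ball 0 1" "\<And>z. z \<in> ball 0 1 \<Longrightarrow> \<phi> z = exp (g z)"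
      using contractible_imp_holomorphic_log[OF \<phi>(1) convex_imp_contractible[OF convex_ball] \<phi>(2)]
      by blast
    define Rg where "Rg = reflect g"
    have hRg: "Rg holomorphic_on ball 0 1" unfolding Rg_def by (rule reflect_holo[OF g(1)])
    have gRg: "g z + Rg z = 0" if z: "z \<in> ball 0 1" for z
    proof -
      have "(\<lambda>z. g z + Rg z) z = (\<lambda>_. 0) z"
      proof (rule ident_reals[OF _ holomorphic_on_const _ z])
        show "(\<lambda>z. g z + Rg z) holomorphic_on ball 0 1" by (intro holomorphic_intros g(1) hRg)
        fix x :: real assume x: "-1 < x" "x < 1"
        define y where "y = g (complex_of_real x)"
        have xb: "complex_of_real x \<in> ball 0 1" using x by auto
        have "exp (y + cnj y) = \<phi> (complex_of_real x) * R\<phi> (complex_of_real x)"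
          using g(2)[OF xb] by (simp add: y_def R\<phi>_def reflect_def exp_add exp_cnj)
        also have "\<dots> = 1" by (rule \<phi>R[OF xb])
        finally have e1: "exp (y + cnj y) = 1" .
        have "y + cnj y = complex_of_real (2 * Re y)" by (simp add: complex_eq_iff)
        with e1 have "exp (complex_of_real (2 * Re y)) = 1" by simp
        hence "exp (2 * Re y) = 1" by (metis exp_of_real of_real_eq_1_iff)
        hence "Re y = 0" by simp
        hence "y + cnj y = 0" by (simp add: complex_eq_iff)
        thus "g (complex_of_real x) + Rg (complex_of_real x) = 0"
          by (simp add: y_def Rg_def reflect_def)
      qed
      thus ?thesis by simp
    qed

    define v where "v = (\<lambda>z. v0 z * exp (- g z / 2))"
    define u where "u = (\<lambda>z. h z * u0 z * exp (g z / 2))"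
    have hv: "v holomorphic_on ball 0 1" unfolding v_def by (intro holomorphic_intros v0(1) g(1)) auto
    have hu: "u holomorphic_on ball 0 1" unfolding u_def by (intro holomorphic_intros h(1) u0(1) g(1)) auto
    have Rv: "reflect v z = RV z * exp (g z / 2)" if z: "z \<in> ball 0 1" for z
    proof -
      have "reflect v z = RV z * exp (- Rg z / 2)"
        by (simp add: reflect_def v_def RV_def Rg_def exp_cnj)
      also have "- Rg z = g z" using gRg[OF z] by (simp add: add_eq_0_iff)
      finally show ?thesis .
    qed
    have Fuv: "F z = u z * v z" if z: "z \<in> ball 0 1" for z
    proof -
      have "u z * v z = h z * u0 z * v0 z * (exp (g z / 2) * exp (- g z / 2))"
        by (simp add: u_def v_def mult_ac)
      also have "exp (g z / 2) * exp (- g z / 2) = 1" by (simp add: exp_minus)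
      finally show ?thesis using h(3)[OF z] by (simp add: mult_ac)
    qed
    have Guv: "G z = u z * reflect v z" if z: "z \<in> ball 0 1" for z
    proof -
      have "G z - u z * reflect v z = 0"
      proof (rule ident_mult[where P = v0, OF _ v0(1) _ z0(1) v0z0 z])
        show "(\<lambda>z. G z - u z * reflect v z) holomorphic_on ball 0 1"
          by (intro holomorphic_intros hG hu reflect_holo hv)
        fix w :: complex assume w: "w \<in> ball 0 1"
        have ee: "exp (g w / 2) * exp (g w / 2) = exp (g w)"
          by (simp add: exp_add[symmetric])
        have "G w * v0 w = exp (g w) * (h w * (u0 w * v0 w) * RV w)"
          using \<phi>(3)[OF w] g(2)[OF w] h(3)[OF w] by (simp add: mult_ac)
        also have "\<dots> = (u w * reflect v w) * v0 w"
          using Rv[OF w] ee by (simp add: u_def mult_ac)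
        finally show "(G w - u w * reflect v w) * v0 w = 0" by (simp add: algebra_simps)
      qed
      thus ?thesis by simp
    qed
    show ?thesis using hu hv Fuv Guv by blast
  qed
qed


end
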